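(* In the RSP setting described in the context, for every $i\ge 0$ we have $C_{\mathrm{opt}}(G^-_{S_{i+1}})\ge 2\,C_{\mathrm{opt}}(G^-_{S_i})$. Consequently, if $b\in\mathbb{N}^+$ and $i^*$ is the smallest integer $i\ge0$ with $C_{\mathrm{opt}}(G^-_{S_i})>b$, then for every $0\le i<i^*$, $$C_{\mathrm{opt}}(G^-_{S_i})\le 2^{-(i^*-1-i)}C_{\mathrm{opt}}(G^-_{S_{i^*-1}})\le 2^{i+1-i^*}\cdot b .$$
   Context: RSP setting: $G=(V,E,c,r)$ is a weakly connected directed graph with $n=|V|$, $m=|E|$, $c,r:E\to\mathbb{R}_{\ge0}$, vertices $s\ne t$, bound $R\ge 0$. Paths are edge sets; $P_v$ = set of paths from $s$ to $v$; $C_G(p)=\sum_{e\in p}c(e)$, $R_G(p)=\sum_{e\in p}r(e)$; $C_{\mathrm{opt}}(G)=\min\{C_G(p):p\in P_t,\ R_G(p)\le R\}$. It is assumed that a path $p\in P_t$ with $R_G(p)\le R$ exists and that $C_{\mathrm{opt}}(G)>0$. For $S>0$, $G^-_S=(V,E,c^-_S,r)$ with $c^-_S(e)=\lfloor c(e)/S\rfloor$ (same $s,t,R$). Bounds $L,U$: sort the edges $e_1,\dots,e_m$ ascending by cost; let $j^*$ be the smallest $j$ such that some $p\in P_t$ with $R_G(p)\le R$ uses only edges from $\{e_1,\dots,e_j\}$; set $L=c(e_{j^*})$ and $U=nL$. Scaling factors: $S_i=2^{-i}U/(2n)$ for $i\in\mathbb{N}_0$. *)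

theory Defs
  imports Complex_Main
begin

text \<open>A directed (multi)graph: vertex set V, edge set E, each edge e has a source
  src e and a target tgt e.  Paths are (simple) directed paths, identified with
  their edge sets.\<close>

definition weakly_connected ::
  "'v set \<Rightarrow> 'e set \<Rightarrow> ('e \<Rightarrow> 'v) \<Rightarrow> ('e \<Rightarrow> 'v) \<Rightarrow> bool" where
  "weakly_connected V E src tgt \<longleftrightarrow>
     (let Rl = {(src e, tgt e) | e. e \<in> E} in
      \<forall>u\<in>V. \<forall>v\<in>V. (u, v) \<in> (Rl \<union> Rl\<inverse>)\<^sup>*)"

text \<open>es is the edge list of a simple directed path from s to v:
  src e1 = s, tgt e_j = src e_(j+1), tgt e_k = v, and all visited vertices distinct.\<close>
definition path_list ::
  "'e set \<Rightarrow> ('e \<Rightarrow> 'v) \<Rightarrow> ('e \<Rightarrow> 'v) \<Rightarrow> 'v \<Rightarrow> 'v \<Rightarrow> 'e list \<Rightarrow> bool" where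
  "path_list E src tgt s v es \<longleftrightarrow>
     set es \<subseteq> E \<and> map src es @ [v] = s # map tgt es \<and> distinct (s # map tgt es)"

definition paths ::
  "'e set \<Rightarrow> ('e \<Rightarrow> 'v) \<Rightarrow> ('e \<Rightarrow> 'v) \<Rightarrow> 'v \<Rightarrow> 'v \<Rightarrow> 'e set set" where
  "paths E src tgt s v = {set es | es. path_list E src tgt s v es}"

definition Copt ::
  "'e set \<Rightarrow> ('e \<Rightarrow> 'v) \<Rightarrow> ('e \<Rightarrow> 'v) \<Rightarrow> 'v \<Rightarrow> 'v \<Rightarrow>
   ('e \<Rightarrow> real) \<Rightarrow> ('e \<Rightarrow> real) \<Rightarrow> real \<Rightarrow> real" where
  "Copt E src tgt s t c r R =
     Min {(\<Sum>e\<in>p. c e) | p. p \<in> paths E src tgt s t \<and> (\<Sum>e\<in>p. r e) \<le> R}"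

definition scaled_cost :: "('e \<Rightarrow> real) \<Rightarrow> real \<Rightarrow> 'e \<Rightarrow> real" where
  "scaled_cost c S = (\<lambda>e. real_of_int \<lfloor>c e / S\<rfloor>)"

text \<open>Lower bound L, computed from a list es enumerating E sorted ascending by cost:
  j* is the least j such that a feasible s-t path uses only edges among the first j,
  and L = c(e_{j*}) (1-based indexing, hence es ! (j* - 1)).\<close>
definition jstar ::
  "'e set \<Rightarrow> ('e \<Rightarrow> 'v) \<Rightarrow> ('e \<Rightarrow> 'v) \<Rightarrow> 'v \<Rightarrow> 'v \<Rightarrow>
   ('e \<Rightarrow> real) \<Rightarrow> real \<Rightarrow> 'e list \<Rightarrow> nat" where
  "jstar E src tgt s t r R es =
     (LEAST j. \<exists>p \<in> paths E src tgt s t. (\<Sum>e\<in>p. r e) \<le> R \<and> p \<subseteq> set (take j es))"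

definition Lbound ::
  "'e set \<Rightarrow> ('e \<Rightarrow> 'v) \<Rightarrow> ('e \<Rightarrow> 'v) \<Rightarrow> 'v \<Rightarrow> 'v \<Rightarrow>
   ('e \<Rightarrow> real) \<Rightarrow> ('e \<Rightarrow> real) \<Rightarrow> real \<Rightarrow> 'e list \<Rightarrow> real" where
  "Lbound E src tgt s t c r R es = c (es ! (jstar E src tgt s t r R es - 1))"

definition Ubound ::
  "'v set \<Rightarrow> 'e set \<Rightarrow> ('e \<Rightarrow> 'v) \<Rightarrow> ('e \<Rightarrow> 'v) \<Rightarrow> 'v \<Rightarrow> 'v \<Rightarrow>
   ('e \<Rightarrow> real) \<Rightarrow> ('e \<Rightarrow> real) \<Rightarrow> real \<Rightarrow> 'e list \<Rightarrow> real" where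
  "Ubound V E src tgt s t c r R es = real (card V) * Lbound E src tgt s t c r R es"

definition scale_factor ::
  "'v set \<Rightarrow> 'e set \<Rightarrow> ('e \<Rightarrow> 'v) \<Rightarrow> ('e \<Rightarrow> 'v) \<Rightarrow> 'v \<Rightarrow> 'v \<Rightarrow>
   ('e \<Rightarrow> real) \<Rightarrow> ('e \<Rightarrow> real) \<Rightarrow> real \<Rightarrow> 'e list \<Rightarrow> nat \<Rightarrow> real" where
  "scale_factor V E src tgt s t c r R es i =
     (1/2) ^ i * Ubound V E src tgt s t c r R es / (2 * real (card V))"

end

theory Submission
  imports Defs
begin

lemma floor_double: "2 * real_of_int \<lfloor>x\<rfloor> \<le> real_of_int \<lfloor>2 * (x::real)\<rfloor>"
proof -
  have "2 * \<lfloor>x\<rfloor> \<le> \<lfloor>2 * x\<rfloor>"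
    by (simp add: le_floor_iff)
  thus ?thesis by linarith
qed

lemma Min_mono_double:
  assumes "finite P" "P \<noteq> {}" "\<And>p. p \<in> P \<Longrightarrow> 2 * f p \<le> (g p :: real)"
  shows "2 * Min (f ` P) \<le> Min (g ` P)"
proof -
  have "\<forall>y \<in> g ` P. 2 * Min (f ` P) \<le> y"
  proof
    fix y assume "y \<in> g ` P"
    then obtain p where p: "p \<in> P" "y = g p" by auto
    have "Min (f ` P) \<le> f p" using assms p by auto
    thus "2 * Min (f ` P) \<le> y" using assms(3)[OF p(1)] p by linarith
  qed
  thus ?thesis using assms by (simp add: Min_ge_iff)
qed

theorem lemma9:
  fixes V :: "'v set" and E :: "'e set" and src tgt :: "'e \<Rightarrow> 'v"
    and c r :: "'e \<Rightarrow> real" and s t :: 'v and R :: real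
    and es :: "'e list" and b :: nat
  defines "S \<equiv> scale_factor V E src tgt s t c r R es"
  defines "Cm \<equiv> (\<lambda>i. Copt E src tgt s t (scaled_cost c (S i)) r R)"
  assumes finV: "finite V" and finE: "finite E"
    and edges: "\<forall>e\<in>E. src e \<in> V \<and> tgt e \<in> V"
    and wc: "weakly_connected V E src tgt"
    and st: "s \<in> V" "t \<in> V" "s \<noteq> t"
    and c_nonneg: "\<forall>e\<in>E. c e \<ge> 0" and r_nonneg: "\<forall>e\<in>E. r e \<ge> 0"
    and R_nonneg: "R \<ge> 0"
    and feasible: "\<exists>p \<in> paths E src tgt s t. (\<Sum>e\<in>p. r e) \<le> R"
    and Copt_pos: "Copt E src tgt s t c r R > 0"
    and es_enum: "distinct es" "set es = E" "sorted (map c es)"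
    and b_pos: "b > 0"
  shows "(\<forall>i. Cm (Suc i) \<ge> 2 * Cm i) \<and>
         (let istar = (LEAST i. Cm i > real b) in
            \<forall>i < istar.
              Cm i \<le> 2 powi (- (int istar - 1 - int i)) * Cm (istar - 1) \<and>
              2 powi (- (int istar - 1 - int i)) * Cm (istar - 1)
                \<le> 2 powi (int i + 1 - int istar) * real b)"
proof -
  define P where "P = {p. p \<in> paths E src tgt s t \<and> (\<Sum>e\<in>p. r e) \<le> R}"
  have Csum: "Copt E src tgt s t f r R = Min ((\<lambda>p. \<Sum>e\<in>p. f e) ` P)" for f
    unfolding Copt_def P_def by (rule arg_cong[where f=Min]) auto
  have Psub: "p \<subseteq> E" if "p \<in> P" for p
    using that unfolding P_def paths_def path_list_def by auto
  have Pne: "p \<noteq> {}" if "p \<in> P" for p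
  proof
    assume "p = {}"
    with that obtain xs where "path_list E src tgt s t xs" "set xs = {}"
      unfolding P_def paths_def by auto
    thus False using st(3) unfolding path_list_def by auto
  qed
  have finP: "finite P" using Psub finE
    by (meson finite_Pow_iff finite_subset Pow_iff subsetI)
  have neP: "P \<noteq> {}" using feasible unfolding P_def by auto
  have SSuc: "S (Suc i) = S i / 2" for i
    unfolding S_def scale_factor_def by simp
  have step: "2 * Cm i \<le> Cm (Suc i)" for i
  proof -
    have "2 * (\<Sum>e\<in>p. scaled_cost c (S i) e) \<le> (\<Sum>e\<in>p. scaled_cost c (S (Suc i)) e)" for p
    proof -
      have "2 * (\<Sum>e\<in>p. scaled_cost c (S i) e) = (\<Sum>e\<in>p. 2 * scaled_cost c (S i) e)"
        by (simp add: sum_distrib_left)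
      also have "\<dots> \<le> (\<Sum>e\<in>p. scaled_cost c (S (Suc i)) e)"
      proof (rule sum_mono)
        fix e
        have "c e / (S i / 2) = 2 * (c e / S i)" by simp
        thus "2 * scaled_cost c (S i) e \<le> scaled_cost c (S (Suc i)) e"
          unfolding scaled_cost_def SSuc using floor_double[of "c e / S i"] by metis
      qed
      finally show ?thesis .
    qed
    thus ?thesis unfolding Cm_def Csum using Min_mono_double[OF finP neP] by blast
  qed
  define J where "J = jstar E src tgt s t r R es"
  define L where "L = c (es ! (J - 1))"
  have predJ: "\<exists>p \<in> paths E src tgt s t. (\<Sum>e\<in>p. r e) \<le> R \<and> p \<subseteq> set (take J es)"
  proof -
    obtain p where p: "p \<in> paths E src tgt s t" "(\<Sum>e\<in>p. r e) \<le> R" using feasible by auto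
    hence "p \<subseteq> set (take (length es) es)" using Psub[of p] es_enum unfolding P_def by auto
    with p have "\<exists>p \<in> paths E src tgt s t. (\<Sum>e\<in>p. r e) \<le> R \<and> p \<subseteq> set (take (length es) es)" by blast
    thus ?thesis unfolding J_def jstar_def by (rule LeastI)
  qed
  have Jle: "J \<le> length es"
  proof -
    obtain p where p: "p \<in> paths E src tgt s t" "(\<Sum>e\<in>p. r e) \<le> R" using feasible by auto
    hence "p \<subseteq> set (take (length es) es)" using Psub[of p] es_enum unfolding P_def by auto
    with p have "\<exists>p \<in> paths E src tgt s t. (\<Sum>e\<in>p. r e) \<le> R \<and> p \<subseteq> set (take (length es) es)" by blast
    thus ?thesis unfolding J_def jstar_def by (rule Least_le)
  qed
  have J0: "J \<ge> 1"
  proof (rule ccontr)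
    assume "\<not> J \<ge> 1"
    hence "J = 0" by simp
    with predJ obtain p where "p \<in> P" "p \<subseteq> {}" unfolding P_def by auto
    thus False using Pne by auto
  qed
  have Lpos: "L > 0"
  proof (rule ccontr)
    assume "\<not> L > 0"
    have Lin: "es ! (J - 1) \<in> E" using Jle J0 es_enum(2) by auto
    hence "L = 0" using \<open>\<not> L > 0\<close> c_nonneg unfolding L_def by force
    obtain p where p: "p \<in> P" "p \<subseteq> set (take J es)" using predJ unfolding P_def by auto
    have "c e = 0" if ep: "e \<in> p" for e
    proof -
      have "e \<in> set (take J es)" using p(2) ep by blast
      then obtain k where k: "k < J" "e = es ! k" using Jle
        by (auto simp: in_set_conv_nth)
      have "c (es ! k) \<le> c (es ! (J - 1))"
        using es_enum(3) k Jle J0 by (simp add: sorted_iff_nth_mono)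
      moreover have "c e \<ge> 0" using c_nonneg Psub p(1) ep by auto
      ultimately show ?thesis using k \<open>L = 0\<close> unfolding L_def by simp
    qed
    hence "(\<Sum>e\<in>p. c e) = 0" by simp
    hence "Copt E src tgt s t c r R \<le> 0" unfolding Csum using finP p(1)
      by (metis (no_types, lifting) Min_le finite_imageI image_eqI)
    thus False using Copt_pos by simp
  qed
  have cardV: "card V > 0" using finV st(1) card_gt_0_iff by blast
  have S0: "S 0 = L / 2"
    unfolding S_def scale_factor_def Ubound_def Lbound_def L_def J_def using cardV by simp
  have big: "\<exists>e \<in> p. c e \<ge> L" if pP: "p \<in> P" for p
  proof (rule ccontr)
    assume "\<not> (\<exists>e \<in> p. c e \<ge> L)"
    hence small: "\<forall>e\<in>p. c e < L" by auto
    have "p \<subseteq> set (take (J - 1) es)"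
    proof
      fix e assume e: "e \<in> p"
      have "e \<in> set es" using Psub[OF pP] es_enum(2) e by blast
      then obtain k where k: "k < length es" "e = es ! k"
        by (auto simp: in_set_conv_nth)
      have "k < J - 1"
      proof (rule ccontr)
        assume "\<not> k < J - 1"
        hence "c (es ! (J - 1)) \<le> c (es ! k)"
          using es_enum(3) k by (simp add: sorted_iff_nth_mono)
        thus False using small e k unfolding L_def by force
      qed
      thus "e \<in> set (take (J - 1) es)" using k by (auto simp: in_set_conv_nth)
    qed
    hence "J \<le> J - 1" using pP unfolding P_def J_def jstar_def
      by (metis (mono_tags, lifting) Least_le mem_Collect_eq)
    thus False using J0 by simp
  qed
  have Cm0: "Cm 0 \<ge> 2"
  proof -
    have "2 \<le> (\<Sum>e\<in>p. scaled_cost c (S 0) e)" if pP: "p \<in> P" for p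
    proof -
      obtain e0 where e0: "e0 \<in> p" "c e0 \<ge> L" using big[OF pP] by auto
      have fp: "finite p" using Psub[OF pP] finE finite_subset by blast
      have nn: "\<forall>e\<in>p. scaled_cost c (S 0) e \<ge> 0"
        using Psub[OF pP] c_nonneg Lpos S0 unfolding scaled_cost_def by auto
      have "2 \<le> c e0 / (L/2)" using e0 Lpos by (simp add: field_simps)
      hence "2 \<le> scaled_cost c (S 0) e0" unfolding scaled_cost_def S0
        by (simp add: le_floor_iff)
      also have "\<dots> \<le> (\<Sum>e\<in>p. scaled_cost c (S 0) e)"
        using member_le_sum[OF e0(1), of "scaled_cost c (S 0)"] nn fp by auto
      finally show ?thesis .
    qed
    thus ?thesis unfolding Cm_def Csum using finP neP by (simp add: Min_ge_iff)
  qed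
  have grow: "Cm (i + k) \<ge> 2 ^ k * Cm i" for i k
  proof (induction k)
    case 0 thus ?case by simp
  next
    case (Suc k)
    have "2 ^ Suc k * Cm i = 2 * (2 ^ k * Cm i)" by simp
    also have "\<dots> \<le> 2 * Cm (i + k)" using Suc by simp
    also have "\<dots> \<le> Cm (i + Suc k)" using step[of "i + k"] by simp
    finally show ?case .
  qed
  have ex: "Cm b > real b"
  proof -
    have "real n < 2 ^ n" for n :: nat
    proof (induction n)
      case (Suc n)
      have "(1::real) \<le> 2 ^ n" by simp
      have "(2::real) ^ Suc n = 2 * 2 ^ n" by simp
      thus ?case using Suc.IH \<open>(1::real) \<le> 2 ^ n\<close> by (simp only: of_nat_Suc)
    qed simp
    hence "real b < 2 ^ b" .
    also have "\<dots> \<le> 2 ^ b * Cm 0" using Cm0 by simp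
    also have "\<dots> \<le> Cm b" using grow[of b 0] by simp
    finally show ?thesis by linarith
  qed
  define istar where "istar = (LEAST i. Cm i > real b)"
  have part2: "Cm i \<le> 2 powi (- (int istar - 1 - int i)) * Cm (istar - 1) \<and>
              2 powi (- (int istar - 1 - int i)) * Cm (istar - 1)
                \<le> 2 powi (int i + 1 - int istar) * real b" if i: "i < istar" for i
  proof -
    define k where "k = istar - 1 - i"
    have ik: "istar - 1 = i + k" using i unfolding k_def by simp
    have ek: "- (int istar - 1 - int i) = - int k" using i unfolding k_def by simp
    have ek2: "int i + 1 - int istar = - int k" using i unfolding k_def by simp
    have pw: "(2::real) powi (- int k) = 1 / 2 ^ k"
      by (simp add: power_int_minus inverse_eq_divide)
    have "Cm (istar - 1) \<le> real b"
      using not_less_Least[of "istar - 1" "\<lambda>i. Cm i > real b"] i unfolding istar_def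
      by fastforce
    moreover have "2 ^ k * Cm i \<le> Cm (istar - 1)" using grow ik by simp
    ultimately show ?thesis unfolding ek ek2 pw
      by (simp add: field_simps)
  qed
  show ?thesis using step part2 unfolding istar_def Let_def by blast
qed

end
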